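(* Let $n\ge 1$ and $0\le k\le n$, and let $L_n$ denote the number of Latin squares of order $n$. The number of preference profiles for $n$ men and $n$ women in which both the men's preferences and the women's preferences form Latin squares and there are exactly $k$ pairs of soulmates is \[\frac{L_n^2}{n!} \binom{n}{k} \sum_{i=0}^{n-k} (-1)^i \frac{(n-k)!}{i!}.\]
   Context: A preference profile for $n$ (labeled) men and $n$ (labeled) women consists of, for each man, a strict ranking of the women (bijection to $\{1,\dots,n\}$, 1 = favorite), and for each woman, a strict ranking of the men. The men's preferences form a Latin square if the $n\times n$ matrix whose $i$-th row lists the women in man $i$'s order of preference is a Latin square, i.e. for each rank $r$ the women ranked $r$-th by the different men are distinct; similarly for the women's preferences. A man and a woman are soulmates if each ranks the other first. *)

theory Defs
  imports "HOL-Library.FuncSet" Complex_Main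
begin

text \<open>Men and women are both labelled by {0..<n}.\<close>

definition latin_square :: "nat \<Rightarrow> (nat \<Rightarrow> nat \<Rightarrow> nat) \<Rightarrow> bool" where
  "latin_square n A \<longleftrightarrow>
     A \<in> {0..<n} \<rightarrow>\<^sub>E ({0..<n} \<rightarrow>\<^sub>E {0..<n}) \<and>
     (\<forall>i\<in>{0..<n}. bij_betw (\<lambda>j. A i j) {0..<n} {0..<n}) \<and>
     (\<forall>j\<in>{0..<n}. bij_betw (\<lambda>i. A i j) {0..<n} {0..<n})"

definition num_latin_squares :: "nat \<Rightarrow> nat" where
  "num_latin_squares n = card {A. latin_square n A}"

text \<open>A ranking side: P i x is the rank (in {1..n}, 1 = favourite) that person i gives to
  person x of the opposite sex; each P i is a bijection onto {1..n}.\<close>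

definition rankings :: "nat \<Rightarrow> (nat \<Rightarrow> nat \<Rightarrow> nat) set" where
  "rankings n = {P. P \<in> {0..<n} \<rightarrow>\<^sub>E ({0..<n} \<rightarrow>\<^sub>E {1..n}) \<and>
                    (\<forall>i\<in>{0..<n}. bij_betw (P i) {0..<n} {1..n})}"

definition prefs_latin :: "nat \<Rightarrow> (nat \<Rightarrow> nat \<Rightarrow> nat) \<Rightarrow> bool" where
  "prefs_latin n P \<longleftrightarrow>
     (\<forall>i\<in>{0..<n}. \<forall>j\<in>{0..<n}. \<forall>x\<in>{0..<n}. \<forall>y\<in>{0..<n}.
        i \<noteq> j \<longrightarrow> P i x = P j y \<longrightarrow> x \<noteq> y)"

definition soulmates :: "nat \<Rightarrow> (nat \<Rightarrow> nat \<Rightarrow> nat) \<Rightarrow> (nat \<Rightarrow> nat \<Rightarrow> nat) \<Rightarrow> (nat \<times> nat) set" where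
  "soulmates n PM PW = {(m, w). m \<in> {0..<n} \<and> w \<in> {0..<n} \<and> PM m w = 1 \<and> PW w m = 1}"

end

theory Submission
  imports Defs "HOL-Combinatorics.Permutations" "HOL-Computational_Algebra.Formal_Power_Series"
begin


definition der :: "'a set \<Rightarrow> ('a \<Rightarrow> 'a) set" where
  "der A = {p. p permutes A \<and> (\<forall>x\<in>A. p x \<noteq> x)}"

definition dd :: "nat \<Rightarrow> real" where
  "dd m = (\<Sum>i=0..m. (-1)^i * fact m / fact i)"

lemma der_support: "p \<in> der F \<Longrightarrow> {x. p x \<noteq> x} = F"
  unfolding der_def using permutes_not_in by fastforce

lemma finite_der: "finite A \<Longrightarrow> finite (der A)"
  by (rule finite_subset[OF _ finite_permutations]) (auto simp: der_def)

lemma perm_decomp: "{p. p permutes A} = (\<Union>F\<in>Pow A. der F)"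
proof
  show "{p. p permutes A} \<subseteq> (\<Union>F\<in>Pow A. der F)"
  proof
    fix p assume "p \<in> {p. p permutes A}"
    hence p: "p permutes A" by simp
    have sub: "{x. p x \<noteq> x} \<subseteq> A" using permutes_not_in[OF p] by blast
    have "p permutes {x. p x \<noteq> x}" using p by (simp add: permutes_def)
    hence "p \<in> der {x. p x \<noteq> x}" unfolding der_def by auto
    thus "p \<in> (\<Union>F\<in>Pow A. der F)" using sub by blast
  qed
  show "(\<Union>F\<in>Pow A. der F) \<subseteq> {p. p permutes A}"
    by (auto simp: der_def intro: permutes_subset)
qed

lemma card_UN_der:
  assumes "finite A" and "\<FF> \<subseteq> Pow A"
  shows "card (\<Union>F\<in>\<FF>. der F) = (\<Sum>F\<in>\<FF>. card (der F))"
proof (rule card_UN_disjoint)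
  show "finite \<FF>" using assms by (metis finite_Pow_iff finite_subset)
  show "\<forall>i\<in>\<FF>. finite (der i)" using assms by (metis PowD finite_der finite_subset subsetD)
  show "\<forall>i\<in>\<FF>. \<forall>j\<in>\<FF>. i \<noteq> j \<longrightarrow> der i \<inter> der j = {}"
  proof (intro ballI impI equalityI subsetI)
    fix i j p assume ij: "i \<noteq> j" and p: "p \<in> der i \<inter> der j"
    have "i = {x. p x \<noteq> x}" using p der_support[of p i] by simp
    moreover have "j = {x. p x \<noteq> x}" using p der_support[of p j] by simp
    ultimately show "p \<in> {}" using ij by simp
  qed simp
qed

lemma sum_pow_card:
  assumes "finite A"
  shows "(\<Sum>F\<in>Pow A. g (card F)) = (\<Sum>j\<le>card A. real (card A choose j) * (g j :: real))"
proof -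
  have "(\<Sum>F\<in>Pow A. g (card F)) = (\<Sum>j\<le>card A. \<Sum>F\<in>{F. F \<in> Pow A \<and> card F = j}. g (card F))"
    by (rule sum.group[symmetric]) (use assms card_mono in auto)
  also have "\<dots> = (\<Sum>j\<le>card A. real (card A choose j) * g j)"
  proof (rule sum.cong[OF refl])
    fix j
    have "(\<Sum>F\<in>{F. F \<in> Pow A \<and> card F = j}. g (card F)) = (\<Sum>F\<in>{F. F \<subseteq> A \<and> card F = j}. g j)"
      by (rule sum.cong) auto
    also have "\<dots> = real (card A choose j) * g j" using n_subsets[OF assms] by simp
    finally show "(\<Sum>F\<in>{F. F \<in> Pow A \<and> card F = j}. g (card F)) = real (card A choose j) * g j" .
  qed
  finally show ?thesis .
qed

lemma conv1: "(\<Sum>j=0..m. (\<Sum>i=0..j. (-1)^i / fact i) * (1 / fact (m-j)) :: real) = 1"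
proof -
  define U :: "real fps" where "U = Abs_fps (\<lambda>_. 1)"
  have e: "fps_nth (fps_exp (-1) * U) j = (\<Sum>i=0..j. (-1)^i / fact i)" for j
    by (simp add: fps_mult_nth U_def)
  have "fps_nth ((fps_exp (-1) * U) * fps_exp 1) m = (\<Sum>j=0..m. (\<Sum>i=0..j. (-1)^i / fact i) * (1 / fact (m-j)))"
    by (simp add: fps_mult_nth e U_def)
  moreover have "(fps_exp (-1) * U) * fps_exp 1 = U"
  proof -
    have "fps_exp (-1) * fps_exp (1::real) = fps_exp (-1 + 1)" by (rule fps_exp_add_mult[symmetric])
    hence 1: "fps_exp (-1) * fps_exp (1::real) = 1" by simp
    have "(fps_exp (-1) * U) * fps_exp 1 = U * (fps_exp (-1) * fps_exp (1::real))" by (metis mult.assoc mult.commute)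
    thus ?thesis using 1 by simp
  qed
  moreover have "fps_nth U m = 1" by (simp add: U_def)
  ultimately show ?thesis by simp
qed

lemma binom_dd: "(\<Sum>j\<le>m. real (m choose j) * dd j) = fact m"
proof -
  have "(\<Sum>j\<le>m. real (m choose j) * dd j) = (\<Sum>j=0..m. fact m * ((\<Sum>i=0..j. (-1)^i / fact i) * (1 / fact (m-j))))"
  proof (rule sum.cong)
    fix j assume "j \<in> {0..m}"
    hence j: "j \<le> m" by simp
    have "dd j = fact j * (\<Sum>i=0..j. (-1)^i / fact i)"
      unfolding dd_def by (simp add: sum_distrib_left mult.commute)
    thus "real (m choose j) * dd j = fact m * ((\<Sum>i=0..j. (-1)^i / fact i) * (1 / fact (m-j)))"
      using j by (simp add: binomial_fact)
  qed auto
  also have "\<dots> = fact m * (\<Sum>j=0..m. (\<Sum>i=0..j. (-1)^i / fact i) * (1 / fact (m-j)))"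
    by (rule sum_distrib_left[symmetric])
  also have "\<dots> = fact m" by (simp only: conv1)
  finally show ?thesis .
qed

lemma card_der: "finite A \<Longrightarrow> real (card (der A)) = dd (card A)"
proof (induction "card A" arbitrary: A rule: less_induct)
  case less
  define m where "m = card A"
  have fin: "finite (Pow A)" using less.prems by simp
  have "fact m = real (card {p. p permutes A})" using card_permutations[OF refl less.prems] m_def by simp
  also have "\<dots> = (\<Sum>F\<in>Pow A. real (card (der F)))"
    unfolding perm_decomp using card_UN_der[OF less.prems, of "Pow A"] by simp
  also have "\<dots> = real (card (der A)) + (\<Sum>F\<in>Pow A - {A}. dd (card F))"
  proof -
    have "(\<Sum>F\<in>Pow A. real (card (der F))) = real (card (der A)) + (\<Sum>F\<in>Pow A - {A}. real (card (der F)))"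
      using sum.remove[OF fin, of A] by simp
    moreover have "(\<Sum>F\<in>Pow A - {A}. real (card (der F))) = (\<Sum>F\<in>Pow A - {A}. dd (card F))"
    proof (rule sum.cong[OF refl])
      fix F assume F: "F \<in> Pow A - {A}"
      hence "F \<subset> A" by auto
      hence lt: "card F < card A" using less.prems psubset_card_mono by meson
      have "finite F" using F less.prems finite_subset by auto
      thus "real (card (der F)) = dd (card F)"
        by (rule less.hyps[OF lt])
    qed
    ultimately show ?thesis by simp
  qed
  also have "(\<Sum>F\<in>Pow A - {A}. dd (card F)) = (\<Sum>F\<in>Pow A. dd (card F)) - dd m"
    using sum.remove[OF fin, of A "\<lambda>F. dd (card F)"] m_def by simp
  also have "(\<Sum>F\<in>Pow A. dd (card F)) = fact m"
    using sum_pow_card[OF less.prems, of dd] binom_dd m_def by simp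
  finally show ?case using m_def by simp
qed



definition SS :: "nat \<Rightarrow> (nat \<Rightarrow> nat \<Rightarrow> nat) set" where
  "SS n = {P \<in> rankings n. prefs_latin n P}"

definition first :: "nat \<Rightarrow> (nat \<Rightarrow> nat \<Rightarrow> nat) \<Rightarrow> nat \<Rightarrow> nat" where
  "first n P i = (if i < n then (THE w. w < n \<and> P i w = 1) else i)"

lemma endo_bij: "finite A \<Longrightarrow> f ` A \<subseteq> A \<Longrightarrow> inj_on f A \<Longrightarrow> bij_betw f A A"
  using endo_inj_surj by (simp add: bij_betw_def)

lemma rank_bij: "P \<in> rankings n \<Longrightarrow> i < n \<Longrightarrow> bij_betw (P i) {0..<n} {1..n}"
  unfolding rankings_def by auto

lemma first_char:
  assumes "P \<in> rankings n" "i < n" "1 \<le> n"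
  shows "first n P i < n \<and> P i (first n P i) = 1"
    and "\<And>w. w < n \<Longrightarrow> P i w = 1 \<Longrightarrow> first n P i = w"
proof -
  have b: "bij_betw (P i) {0..<n} {1..n}" using rank_bij assms by blast
  have "P i ` {0..<n} = {1..n}" using b by (simp add: bij_betw_def)
  hence "1 \<in> P i ` {0..<n}" using assms(3) by simp
  then obtain w0 where w0: "w0 < n" "P i w0 = 1" by auto
  have inj: "inj_on (P i) {0..<n}" using b by (simp add: bij_betw_def)
  have uniq: "w = w0" if "w < n" "P i w = 1" for w
  proof (rule inj_onD[OF inj])
    show "P i w = P i w0" using that w0 by simp
  qed (use that w0 in auto)
  have th: "(THE w. w < n \<and> P i w = 1) = w0"
    by (rule the_equality) (use w0 uniq in blast)+
  show "first n P i < n \<and> P i (first n P i) = 1" using th w0 assms(2) unfolding first_def by auto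
  show "\<And>w. w < n \<Longrightarrow> P i w = 1 \<Longrightarrow> first n P i = w"
  proof -
    fix w assume "w < n" "P i w = 1"
    then have "w = w0" by (rule uniq)
    then show "first n P i = w" using th assms(2) unfolding first_def by simp
  qed
qed

lemma first_perm:
  assumes "P \<in> SS n" "1 \<le> n"
  shows "first n P permutes {0..<n}"
proof -
  have R: "P \<in> rankings n" and L: "prefs_latin n P" using assms unfolding SS_def by auto
  have into: "first n P ` {0..<n} \<subseteq> {0..<n}"
  proof
    fix y assume "y \<in> first n P ` {0..<n}"
    then obtain i where i: "i < n" "y = first n P i" by auto
    show "y \<in> {0..<n}" using first_char(1)[OF R i(1) assms(2)] i(2) by simp
  qed
  have inj: "inj_on (first n P) {0..<n}"
  proof (rule inj_onI)
    fix i j assume i: "i \<in> {0..<n}" and j: "j \<in> {0..<n}" and eq: "first n P i = first n P j"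
    show "i = j"
    proof (rule ccontr)
      assume ne: "i \<noteq> j"
      have A: "P i (first n P i) = 1" "first n P i < n" using first_char(1)[OF R _ assms(2), of i] i by auto
      have B: "P j (first n P i) = 1" using first_char(1)[OF R _ assms(2), of j] j eq by simp
      have "first n P i \<noteq> first n P i"
        using L[unfolded prefs_latin_def, rule_format, of i j "first n P i" "first n P i"] i j ne A B by simp
      then show False by simp
    qed
  qed
  have "bij_betw (first n P) {0..<n} {0..<n}" using endo_bij[OF _ into inj] by simp
  then show ?thesis by (rule bij_imp_permutes) (simp add: first_def)
qed

lemma card_soul:
  assumes "PM \<in> rankings n" "PW \<in> rankings n" "1 \<le> n"
  shows "card (soulmates n PM PW) = card {x\<in>{0..<n}. (first n PW \<circ> first n PM) x = x}"
proof -
  have "soulmates n PM PW = (\<lambda>m. (m, first n PM m)) ` {x\<in>{0..<n}. (first n PW \<circ> first n PM) x = x}"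
  proof (rule set_eqI, rule iffI)
    fix q assume "q \<in> soulmates n PM PW"
    then obtain m w where q: "q = (m, w)" "m < n" "w < n" "PM m w = 1" "PW w m = 1"
      unfolding soulmates_def by auto
    have "first n PM m = w" using first_char(2)[OF assms(1) q(2) assms(3) q(3) q(4)] .
    moreover have "first n PW w = m" using first_char(2)[OF assms(2) q(3) assms(3) q(2) q(5)] .
    ultimately show "q \<in> (\<lambda>m. (m, first n PM m)) ` {x\<in>{0..<n}. (first n PW \<circ> first n PM) x = x}"
      using q by auto
  next
    fix q assume "q \<in> (\<lambda>m. (m, first n PM m)) ` {x\<in>{0..<n}. (first n PW \<circ> first n PM) x = x}"
    then obtain m where m: "q = (m, first n PM m)" "m < n" "first n PW (first n PM m) = m" by auto
    have w: "first n PM m < n" "PM m (first n PM m) = 1" using first_char(1)[OF assms(1) m(2) assms(3)] by auto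
    have "PW (first n PM m) (first n PW (first n PM m)) = 1" using first_char(1)[OF assms(2) w(1) assms(3)] by auto
    then show "q \<in> soulmates n PM PW" using m w unfolding soulmates_def by auto
  qed
  moreover have "inj_on (\<lambda>m. (m, first n PM m)) A" for A by (auto simp: inj_on_def)
  ultimately show ?thesis by (simp add: card_image)
qed

definition shift :: "nat \<Rightarrow> (nat \<Rightarrow> nat) \<Rightarrow> (nat \<Rightarrow> nat \<Rightarrow> nat) \<Rightarrow> (nat \<Rightarrow> nat \<Rightarrow> nat)" where
  "shift n \<pi> P = (\<lambda>i\<in>{0..<n}. P (\<pi> i))"

lemma shift_SS:
  assumes "\<pi> permutes {0..<n}" "P \<in> SS n"
  shows "shift n \<pi> P \<in> SS n"
proof -
  have pi: "\<And>i. i < n \<Longrightarrow> \<pi> i < n" using permutes_in_image[OF assms(1)] by simp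
  have inj: "\<And>i j. \<pi> i = \<pi> j \<Longrightarrow> i = j" using permutes_inj[OF assms(1)] by (simp add: inj_eq)
  have R: "P \<in> rankings n" and L: "prefs_latin n P" using assms unfolding SS_def by auto
  have "shift n \<pi> P \<in> rankings n"
    using R pi unfolding rankings_def shift_def by (auto simp: PiE_iff)
  moreover have "prefs_latin n (shift n \<pi> P)"
    unfolding prefs_latin_def
  proof (intro ballI impI)
    fix i j x y assume ij: "i \<in> {0..<n}" "j \<in> {0..<n}" "x \<in> {0..<n}" "y \<in> {0..<n}"
      and ne: "i \<noteq> j" and eq: "shift n \<pi> P i x = shift n \<pi> P j y"
    have "P (\<pi> i) x = P (\<pi> j) y" using eq ij by (simp add: shift_def)
    moreover have "\<pi> i \<noteq> \<pi> j" using ne inj by blast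
    moreover have "\<pi> i \<in> {0..<n}" "\<pi> j \<in> {0..<n}" using pi ij by auto
    ultimately show "x \<noteq> y" using L ij unfolding prefs_latin_def by blast
  qed
  ultimately show ?thesis unfolding SS_def by simp
qed

lemma first_shift:
  assumes "\<pi> permutes {0..<n}"
  shows "first n (shift n \<pi> P) = first n P \<circ> \<pi>"
proof
  fix i
  show "first n (shift n \<pi> P) i = (first n P \<circ> \<pi>) i"
  proof (cases "i < n")
    case True
    then have "\<pi> i < n" using permutes_in_image[OF assms] by simp
    then show ?thesis using True by (simp add: first_def shift_def)
  next
    case False
    then have "\<pi> i = i" using permutes_not_in[OF assms] by simp
    then show ?thesis using False by (simp add: first_def)
  qed
qed

lemma shift_comp: "(\<And>i. i < n \<Longrightarrow> \<pi> i < n) \<Longrightarrow> shift n \<pi> (shift n \<rho> P) = shift n (\<rho> \<circ> \<pi>) P"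
  by (auto simp: shift_def fun_eq_iff)

lemma shift_id: "P \<in> SS n \<Longrightarrow> shift n id P = P"
  unfolding SS_def rankings_def shift_def
  by (auto simp: fun_eq_iff PiE_def extensional_def)

definition fib :: "nat \<Rightarrow> (nat \<Rightarrow> nat) \<Rightarrow> (nat \<Rightarrow> nat \<Rightarrow> nat) set" where
  "fib n \<sigma> = {P \<in> SS n. first n P = \<sigma>}"

lemma card_fib:
  assumes "\<sigma> permutes {0..<n}"
  shows "card (fib n \<sigma>) = card (fib n id)"
proof -
  have isg: "inv \<sigma> permutes {0..<n}" using permutes_inv[OF assms] .
  have pi1: "\<And>i. i < n \<Longrightarrow> \<sigma> i < n" using permutes_in_image[OF assms] by simp
  have pi2: "\<And>i. i < n \<Longrightarrow> inv \<sigma> i < n" using permutes_in_image[OF isg] by simp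
  have "bij_betw (shift n \<sigma>) (fib n id) (fib n \<sigma>)"
  proof (rule bij_betw_byWitness[where f' = "shift n (inv \<sigma>)"])
    show "\<forall>P\<in>fib n id. shift n (inv \<sigma>) (shift n \<sigma> P) = P"
      using shift_comp[OF pi2] permutes_inv_o(1)[OF assms] shift_id unfolding fib_def by auto
    show "\<forall>P\<in>fib n \<sigma>. shift n \<sigma> (shift n (inv \<sigma>) P) = P"
      using shift_comp[OF pi1] permutes_inv_o(2)[OF assms] shift_id unfolding fib_def by auto
    show "shift n \<sigma> ` fib n id \<subseteq> fib n \<sigma>"
      using shift_SS[OF assms] first_shift[OF assms] unfolding fib_def by auto
    show "shift n (inv \<sigma>) ` fib n \<sigma> \<subseteq> fib n id"
      using shift_SS[OF isg] first_shift[OF isg] permutes_inv_o(1)[OF assms] unfolding fib_def by auto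
  qed
  then show ?thesis by (simp add: bij_betw_same_card)
qed

lemma finite_SS: "finite (SS n)"
proof (rule finite_subset)
  show "SS n \<subseteq> {0..<n} \<rightarrow>\<^sub>E ({0..<n} \<rightarrow>\<^sub>E {1..n})" unfolding SS_def rankings_def by auto
  show "finite ({0..<n} \<rightarrow>\<^sub>E ({0..<n} \<rightarrow>\<^sub>E {1..n}))" by (intro finite_PiE) auto
qed

lemma card_SS:
  assumes "1 \<le> n"
  shows "card (SS n) = fact n * card (fib n id)"
proof -
  have eq: "SS n = (\<Union>\<sigma>\<in>{\<sigma>. \<sigma> permutes {0..<n}}. fib n \<sigma>)"
  proof
    show "SS n \<subseteq> (\<Union>\<sigma>\<in>{\<sigma>. \<sigma> permutes {0..<n}}. fib n \<sigma>)"
    proof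
      fix P assume P: "P \<in> SS n"
      have "first n P permutes {0..<n}" by (rule first_perm[OF P assms])
      moreover have "P \<in> fib n (first n P)" using P unfolding fib_def by simp
      ultimately show "P \<in> (\<Union>\<sigma>\<in>{\<sigma>. \<sigma> permutes {0..<n}}. fib n \<sigma>)" by blast
    qed
    show "(\<Union>\<sigma>\<in>{\<sigma>. \<sigma> permutes {0..<n}}. fib n \<sigma>) \<subseteq> SS n" unfolding fib_def by blast
  qed
  have "card (SS n) = (\<Sum>\<sigma>\<in>{\<sigma>. \<sigma> permutes {0..<n}}. card (fib n \<sigma>))"
    unfolding eq
  proof (rule card_UN_disjoint)
    show "finite {\<sigma>. \<sigma> permutes {0..<n}}" by (rule finite_permutations) simp
    show "\<forall>i\<in>{\<sigma>. \<sigma> permutes {0..<n}}. finite (fib n i)"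
      using finite_SS unfolding fib_def by auto
    show "\<forall>i\<in>{\<sigma>. \<sigma> permutes {0..<n}}. \<forall>j\<in>{\<sigma>. \<sigma> permutes {0..<n}}. i \<noteq> j \<longrightarrow> fib n i \<inter> fib n j = {}"
      unfolding fib_def by blast
  qed
  also have "\<dots> = (\<Sum>\<sigma>\<in>{\<sigma>. \<sigma> permutes {0..<n}}. card (fib n id))"
    by (rule sum.cong[OF refl]) (rule card_fib, simp)
  also have "\<dots> = fact n * card (fib n id)"
    using card_permutations[of "{0..<n}" n] by simp
  finally show ?thesis .
qed



definition toL :: "nat \<Rightarrow> (nat \<Rightarrow> nat \<Rightarrow> nat) \<Rightarrow> (nat \<Rightarrow> nat \<Rightarrow> nat)" where
  "toL n P = (\<lambda>i\<in>{0..<n}. \<lambda>j\<in>{0..<n}. the_inv_into {0..<n} (P i) (Suc j))"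

definition fromL :: "nat \<Rightarrow> (nat \<Rightarrow> nat \<Rightarrow> nat) \<Rightarrow> (nat \<Rightarrow> nat \<Rightarrow> nat)" where
  "fromL n A = (\<lambda>i\<in>{0..<n}. \<lambda>x\<in>{0..<n}. Suc (the_inv_into {0..<n} (A i) x))"

lemma Suc_bij: "bij_betw Suc {0..<n} {1..n}"
  by (simp add: atLeastLessThanSuc_atLeastAtMost)

lemma ext2:
  fixes f g :: "nat \<Rightarrow> nat \<Rightarrow> 'b" and n :: nat
  assumes "f \<in> {0..<n} \<rightarrow>\<^sub>E ({0..<n} \<rightarrow>\<^sub>E X)" "g \<in> {0..<n} \<rightarrow>\<^sub>E ({0..<n} \<rightarrow>\<^sub>E Y)"
    and "\<And>i j. i < n \<Longrightarrow> j < n \<Longrightarrow> f i j = g i j"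
  shows "f = g"
proof
  fix i
  show "f i = g i"
  proof (cases "i < n")
    case True
    show ?thesis
    proof
      fix j
      show "f i j = g i j"
      proof (cases "j < n")
        case True
        then show ?thesis using assms(3) \<open>i < n\<close> by simp
      next
        case False
        have "f i \<in> {0..<n} \<rightarrow>\<^sub>E X"
          by (rule PiE_mem[OF assms(1)]) (use \<open>i < n\<close> in simp)
        moreover have "g i \<in> {0..<n} \<rightarrow>\<^sub>E Y"
          by (rule PiE_mem[OF assms(2)]) (use \<open>i < n\<close> in simp)
        ultimately have "f i j = undefined" "g i j = undefined"
          using False PiE_arb[of "f i" "{0..<n}" "\<lambda>_. X" j] PiE_arb[of "g i" "{0..<n}" "\<lambda>_. Y" j] by simp_all
        then show ?thesis by simp
      qed
    qed
  next
    case False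
    then have "f i = undefined" "g i = undefined"
      using PiE_arb[OF assms(1), of i] PiE_arb[OF assms(2), of i] by simp_all
    then show ?thesis by simp
  qed
qed

lemma latin_row: "latin_square n A \<Longrightarrow> i < n \<Longrightarrow> bij_betw (A i) {0..<n} {0..<n}"
  unfolding latin_square_def by auto

lemma latin_col: "latin_square n A \<Longrightarrow> j < n \<Longrightarrow> inj_on (\<lambda>i. A i j) {0..<n}"
  unfolding latin_square_def bij_betw_def by auto

lemma toL_latin:
  assumes P: "P \<in> SS n"
  shows "latin_square n (toL n P)"
proof -
  have R: "P \<in> rankings n" and L: "prefs_latin n P" using P unfolding SS_def by auto
  have ib: "bij_betw (the_inv_into {0..<n} (P i)) {1..n} {0..<n}" if "i < n" for i
    using bij_betw_the_inv_into[OF rank_bij[OF R that]] .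
  have inj: "inj_on (P i) {0..<n}" if "i < n" for i
    using rank_bij[OF R that] by (simp add: bij_betw_def)
  have val: "the_inv_into {0..<n} (P i) (Suc j) < n \<and> P i (the_inv_into {0..<n} (P i) (Suc j)) = Suc j"
    if "i < n" "j < n" for i j
  proof -
    have m: "Suc j \<in> P i ` {0..<n}" using rank_bij[OF R that(1)] that(2) by (simp add: bij_betw_def)
    have "the_inv_into {0..<n} (P i) (Suc j) \<in> {0..<n}" by (rule the_inv_into_into[OF inj[OF that(1)] m subset_refl])
    then show ?thesis using f_the_inv_into_f[OF inj[OF that(1)] m] by simp
  qed
  have rows: "bij_betw (\<lambda>j. toL n P i j) {0..<n} {0..<n}" if "i < n" for i
  proof -
    have "bij_betw (the_inv_into {0..<n} (P i) \<circ> Suc) {0..<n} {0..<n}"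
      by (rule bij_betw_trans[OF Suc_bij ib[OF that]])
    then show ?thesis
      by (rule bij_betw_cong[THEN iffD1, rotated]) (use that in \<open>simp add: toL_def\<close>)
  qed
  have cols: "bij_betw (\<lambda>i. toL n P i j) {0..<n} {0..<n}" if "j < n" for j
  proof (rule endo_bij)
    show "(\<lambda>i. toL n P i j) ` {0..<n} \<subseteq> {0..<n}" using val that by (auto simp: toL_def)
    show "inj_on (\<lambda>i. toL n P i j) {0..<n}"
    proof (rule inj_onI)
      fix i i' assume i: "i \<in> {0..<n}" and i': "i' \<in> {0..<n}" and eq: "toL n P i j = toL n P i' j"
      show "i = i'"
      proof (rule ccontr)
        assume ne: "i \<noteq> i'"
        define x where "x = the_inv_into {0..<n} (P i) (Suc j)"
        have x: "x < n" "P i x = Suc j" using val[of i j] i that unfolding x_def by auto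
        have "the_inv_into {0..<n} (P i') (Suc j) = x" using eq i i' that unfolding x_def toL_def by simp
        then have "P i' x = Suc j" using val[of i' j] i' that by auto
        then have "x \<noteq> x"
          using L[unfolded prefs_latin_def, rule_format, of i i' x x] i i' ne x by simp
        then show False by simp
      qed
    qed
  qed simp
  have pie: "toL n P \<in> {0..<n} \<rightarrow>\<^sub>E ({0..<n} \<rightarrow>\<^sub>E {0..<n})"
    using val by (auto simp: toL_def)
  show ?thesis unfolding latin_square_def using pie rows cols by auto
qed

lemma fromL_SS:
  assumes A: "latin_square n A"
  shows "fromL n A \<in> SS n"
proof -
  have inj: "inj_on (A i) {0..<n}" if "i < n" for i
    using latin_row[OF A that] by (simp add: bij_betw_def)
  have val: "the_inv_into {0..<n} (A i) x < n \<and> A i (the_inv_into {0..<n} (A i) x) = x"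
    if "i < n" "x < n" for i x
  proof -
    have m: "x \<in> A i ` {0..<n}" using latin_row[OF A that(1)] that(2) by (simp add: bij_betw_def)
    have "the_inv_into {0..<n} (A i) x \<in> {0..<n}" by (rule the_inv_into_into[OF inj[OF that(1)] m subset_refl])
    then show ?thesis using f_the_inv_into_f[OF inj[OF that(1)] m] by simp
  qed
  have rows: "bij_betw (fromL n A i) {0..<n} {1..n}" if "i < n" for i
  proof -
    have "bij_betw (Suc \<circ> the_inv_into {0..<n} (A i)) {0..<n} {1..n}"
      by (rule bij_betw_trans[OF bij_betw_the_inv_into[OF latin_row[OF A that]] Suc_bij])
    then show ?thesis
      by (rule bij_betw_cong[THEN iffD1, rotated]) (use that in \<open>simp add: fromL_def\<close>)
  qed
  have pie: "fromL n A \<in> {0..<n} \<rightarrow>\<^sub>E ({0..<n} \<rightarrow>\<^sub>E {1..n})"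
    unfolding fromL_def by (auto simp: Suc_le_eq val)
  have lat: "prefs_latin n (fromL n A)"
    unfolding prefs_latin_def
  proof (intro ballI impI)
    fix i j x y assume ij: "i \<in> {0..<n}" "j \<in> {0..<n}" "x \<in> {0..<n}" "y \<in> {0..<n}"
      and ne: "i \<noteq> j" and eq: "fromL n A i x = fromL n A j y"
    define r where "r = the_inv_into {0..<n} (A i) x"
    have r: "r < n" "A i r = x" using val[of i x] ij unfolding r_def by auto
    have "the_inv_into {0..<n} (A j) y = r" using eq ij unfolding r_def fromL_def by simp
    then have "A j r = y" using val[of j y] ij by auto
    show "x \<noteq> y"
    proof
      assume "x = y"
      then have "A i r = A j r" using r \<open>A j r = y\<close> by simp
      then have "i = j" using inj_onD[OF latin_col[OF A r(1)]] ij by simp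
      then show False using ne by simp
    qed
  qed
  show ?thesis unfolding SS_def rankings_def using pie rows lat by auto
qed

lemma card_SS_latin: "card (SS n) = num_latin_squares n"
proof -
  have "bij_betw (toL n) (SS n) {A. latin_square n A}"
  proof (rule bij_betw_byWitness[where f' = "fromL n"])
    show "\<forall>P\<in>SS n. fromL n (toL n P) = P"
    proof
      fix P assume P: "P \<in> SS n"
      have R: "P \<in> rankings n" using P unfolding SS_def by auto
      have LT: "latin_square n (toL n P)" by (rule toL_latin[OF P])
      have "fromL n (toL n P) \<in> SS n" by (rule fromL_SS[OF LT])
      show "fromL n (toL n P) = P"
      proof (rule ext2)
        show "fromL n (toL n P) \<in> {0..<n} \<rightarrow>\<^sub>E ({0..<n} \<rightarrow>\<^sub>E {1..n})"
          using fromL_SS[OF LT] unfolding SS_def rankings_def by auto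
        show "P \<in> {0..<n} \<rightarrow>\<^sub>E ({0..<n} \<rightarrow>\<^sub>E {1..n})" using R unfolding rankings_def by auto
        fix i x assume i: "i < n" and x: "x < n"
        have Px: "P i x \<in> {1..n}" using rank_bij[OF R i] x by (auto simp: bij_betw_def)
        have injP: "inj_on (P i) {0..<n}" using rank_bij[OF R i] by (simp add: bij_betw_def)
        have injT: "inj_on (toL n P i) {0..<n}" using latin_row[OF LT i] by (simp add: bij_betw_def)
        have "toL n P i (P i x - 1) = the_inv_into {0..<n} (P i) (P i x)"
          using Px i unfolding toL_def by auto
        also have "\<dots> = x" using the_inv_into_f_f[OF injP] x by simp
        finally have "the_inv_into {0..<n} (toL n P i) x = P i x - 1"
          by (rule the_inv_into_f_eq[OF injT]) (use Px in auto)
        then show "fromL n (toL n P) i x = P i x" using i x Px unfolding fromL_def by simp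
      qed
    qed
    show "\<forall>A\<in>{A. latin_square n A}. toL n (fromL n A) = A"
    proof
      fix A assume "A \<in> {A. latin_square n A}"
      then have A: "latin_square n A" by simp
      have FS: "fromL n A \<in> SS n" by (rule fromL_SS[OF A])
      show "toL n (fromL n A) = A"
      proof (rule ext2)
        show "toL n (fromL n A) \<in> {0..<n} \<rightarrow>\<^sub>E ({0..<n} \<rightarrow>\<^sub>E {0..<n})"
          using toL_latin[OF FS] unfolding latin_square_def by auto
        show "A \<in> {0..<n} \<rightarrow>\<^sub>E ({0..<n} \<rightarrow>\<^sub>E {0..<n})" using A unfolding latin_square_def by auto
        fix i j assume i: "i < n" and j: "j < n"
        have injF: "inj_on (fromL n A i) {0..<n}"
          using rank_bij[of "fromL n A" n i] FS i unfolding SS_def by (simp add: bij_betw_def)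
        have injA: "inj_on (A i) {0..<n}" using latin_row[OF A i] by (simp add: bij_betw_def)
        have Aij: "A i j < n" using latin_row[OF A i] j by (auto simp: bij_betw_def)
        have "fromL n A i (A i j) = Suc (the_inv_into {0..<n} (A i) (A i j))"
          using i Aij unfolding fromL_def by simp
        also have "\<dots> = Suc j" using the_inv_into_f_f[OF injA] j by simp
        finally have "the_inv_into {0..<n} (fromL n A i) (Suc j) = A i j"
          by (rule the_inv_into_f_eq[OF injF]) (use Aij in auto)
        then show "toL n (fromL n A) i j = A i j" using i j unfolding toL_def by simp
      qed
    qed
    show "toL n ` SS n \<subseteq> {A. latin_square n A}" using toL_latin by auto
    show "fromL n ` {A. latin_square n A} \<subseteq> SS n" using fromL_SS by auto
  qed
  then show ?thesis unfolding num_latin_squares_def by (rule bij_betw_same_card)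
qed



lemma der_self: "p permutes A \<Longrightarrow> p \<in> der {x. p x \<noteq> x} \<and> {x. p x \<noteq> x} \<subseteq> A"
proof -
  assume p: "p permutes A"
  have sub: "{x. p x \<noteq> x} \<subseteq> A" using permutes_not_in[OF p] by blast
  have "p permutes {x. p x \<noteq> x}" using p by (simp add: permutes_def)
  hence "p \<in> der {x. p x \<noteq> x}" unfolding der_def by auto
  thus ?thesis using sub by blast
qed

lemma card_Fixk:
  assumes "k \<le> n"
  shows "real (card {\<rho>. \<rho> permutes {0..<n} \<and> card {x\<in>{0..<n}. \<rho> x = x} = k}) = real (n choose k) * dd (n - k)"
proof -
  define FF where "FF = {F. F \<subseteq> {0..<n} \<and> card F = n - k}"
  have eq: "{\<rho>. \<rho> permutes {0..<n} \<and> card {x\<in>{0..<n}. \<rho> x = x} = k} = (\<Union>F\<in>FF. der F)"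
  proof
    show "{\<rho>. \<rho> permutes {0..<n} \<and> card {x\<in>{0..<n}. \<rho> x = x} = k} \<subseteq> (\<Union>F\<in>FF. der F)"
    proof
      fix \<rho> assume "\<rho> \<in> {\<rho>. \<rho> permutes {0..<n} \<and> card {x\<in>{0..<n}. \<rho> x = x} = k}"
      then have r: "\<rho> permutes {0..<n}" "card {x\<in>{0..<n}. \<rho> x = x} = k" by auto
      have ds: "\<rho> \<in> der {x. \<rho> x \<noteq> x}" "{x. \<rho> x \<noteq> x} \<subseteq> {0..<n}" using der_self[OF r(1)] by auto
      have split: "{x\<in>{0..<n}. \<rho> x = x} = {0..<n} - {x. \<rho> x \<noteq> x}" by auto
      have fin: "finite {x. \<rho> x \<noteq> x}" using ds(2) finite_subset by blast
      have "card {x\<in>{0..<n}. \<rho> x = x} = n - card {x. \<rho> x \<noteq> x}"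
        unfolding split using card_Diff_subset[OF fin ds(2)] by simp
      moreover have "card {x. \<rho> x \<noteq> x} \<le> n" using card_mono[OF _ ds(2)] by simp
      ultimately have "card {x. \<rho> x \<noteq> x} = n - k" using r(2) by linarith
      then have "{x. \<rho> x \<noteq> x} \<in> FF" using ds(2) unfolding FF_def by simp
      then show "\<rho> \<in> (\<Union>F\<in>FF. der F)" using ds(1) by blast
    qed
    show "(\<Union>F\<in>FF. der F) \<subseteq> {\<rho>. \<rho> permutes {0..<n} \<and> card {x\<in>{0..<n}. \<rho> x = x} = k}"
    proof
      fix \<rho> assume "\<rho> \<in> (\<Union>F\<in>FF. der F)"
      then obtain F where F: "F \<subseteq> {0..<n}" "card F = n - k" and d: "\<rho> \<in> der F" unfolding FF_def by auto
      have "\<rho> permutes F" using d unfolding der_def by simp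
      then have p: "\<rho> permutes {0..<n}" using permutes_subset F(1) by blast
      have sup: "{x. \<rho> x \<noteq> x} = F" by (rule der_support[OF d])
      have split: "{x\<in>{0..<n}. \<rho> x = x} = {0..<n} - F" using sup by auto
      have fin: "finite F" using F(1) finite_subset by blast
      have "card {x\<in>{0..<n}. \<rho> x = x} = n - (n - k)"
        unfolding split using card_Diff_subset[OF fin F(1)] F(2) by simp
      then show "\<rho> \<in> {\<rho>. \<rho> permutes {0..<n} \<and> card {x\<in>{0..<n}. \<rho> x = x} = k}"
        using p assms by simp
    qed
  qed
  have sub: "FF \<subseteq> Pow {0..<n}" unfolding FF_def by auto
  have "card (\<Union>F\<in>FF. der F) = (\<Sum>F\<in>FF. card (der F))"
    by (rule card_UN_der[OF _ sub]) simp
  then have "real (card (\<Union>F\<in>FF. der F)) = (\<Sum>F\<in>FF. real (card (der F)))"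
    by simp
  also have "\<dots> = (\<Sum>F\<in>FF. dd (n - k))"
  proof (rule sum.cong[OF refl])
    fix F assume "F \<in> FF"
    then have fF: "finite F" and cF: "card F = n - k" unfolding FF_def using finite_subset by auto
    show "real (card (der F)) = dd (n - k)" using card_der[OF fF] cF by simp
  qed
  also have "\<dots> = real (card FF) * dd (n - k)" by simp
  also have "card FF = n choose k"
    unfolding FF_def using n_subsets[of "{0..<n}" "n - k"] binomial_symmetric[OF assms] by simp
  finally show ?thesis unfolding eq .
qed

theorem mainTheorem5:
  fixes n k :: nat
  assumes "n \<ge> 1" and "k \<le> n"
  shows "real (card {(PM, PW). PM \<in> rankings n \<and> PW \<in> rankings n \<and>
                       prefs_latin n PM \<and> prefs_latin n PW \<and>
                       card (soulmates n PM PW) = k})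
         = real (num_latin_squares n) ^ 2 / fact n * real (n choose k) *
           (\<Sum>i = 0..n - k. (-1) ^ i * fact (n - k) / fact i)"
proof -
  define Perm where "Perm = {p. p permutes {0..<n}}"
  define Fixk where "Fixk = {\<rho>. \<rho> permutes {0..<n} \<and> card {x\<in>{0..<n}. \<rho> x = x} = k}"
  define Q where "Q = {q \<in> Perm \<times> Perm. (snd q \<circ> fst q) \<in> Fixk}"
  define c where "c = card (fib n id)"
  define X where "X = {(PM, PW). PM \<in> rankings n \<and> PW \<in> rankings n \<and>
                       prefs_latin n PM \<and> prefs_latin n PW \<and>
                       card (soulmates n PM PW) = k}"
  have n1: "1 \<le> n" using assms(1) by simp
  have finPerm: "finite Perm" unfolding Perm_def by (rule finite_permutations) simp
  have Xeq: "X = (\<Union>q\<in>Q. fib n (fst q) \<times> fib n (snd q))"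
  proof
    show "X \<subseteq> (\<Union>q\<in>Q. fib n (fst q) \<times> fib n (snd q))"
    proof
      fix z assume "z \<in> X"
      then obtain PM PW where z: "z = (PM, PW)" "PM \<in> rankings n" "PW \<in> rankings n"
        "prefs_latin n PM" "prefs_latin n PW" "card (soulmates n PM PW) = k"
        unfolding X_def by auto
      have S: "PM \<in> SS n" "PW \<in> SS n" unfolding SS_def using z by auto
      have p1: "first n PM permutes {0..<n}" "first n PW permutes {0..<n}"
        using first_perm[OF S(1) n1] first_perm[OF S(2) n1] by auto
      have "first n PW \<circ> first n PM \<in> Fixk"
        unfolding Fixk_def using permutes_compose[OF p1(1) p1(2)] card_soul[OF z(2) z(3) n1] z(6) by simp
      then have "(first n PM, first n PW) \<in> Q" unfolding Q_def Perm_def using p1 by simp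
      moreover have "z \<in> fib n (fst (first n PM, first n PW)) \<times> fib n (snd (first n PM, first n PW))"
        unfolding fib_def using S z(1) by simp
      ultimately show "z \<in> (\<Union>q\<in>Q. fib n (fst q) \<times> fib n (snd q))" by blast
    qed
    show "(\<Union>q\<in>Q. fib n (fst q) \<times> fib n (snd q)) \<subseteq> X"
    proof
      fix z assume "z \<in> (\<Union>q\<in>Q. fib n (fst q) \<times> fib n (snd q))"
      then obtain q where q: "q \<in> Q" and zq: "z \<in> fib n (fst q) \<times> fib n (snd q)" by blast
      obtain PM PW where z: "z = (PM, PW)" by (cases z)
      have S: "PM \<in> SS n" "PW \<in> SS n" and f: "first n PM = fst q" "first n PW = snd q"
        using zq z unfolding fib_def by auto
      have R: "PM \<in> rankings n" "PW \<in> rankings n" "prefs_latin n PM" "prefs_latin n PW"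
        using S unfolding SS_def by auto
      have "card (soulmates n PM PW) = k"
        using card_soul[OF R(1) R(2) n1] f q unfolding Q_def Fixk_def by simp
      then show "z \<in> X" unfolding X_def using z R by simp
    qed
  qed
  have finQ: "finite Q"
    by (rule finite_subset[of _ "Perm \<times> Perm"]) (use finPerm in \<open>auto simp: Q_def\<close>)
  have cardX: "card X = card Q * (c * c)"
  proof -
    have "card X = (\<Sum>q\<in>Q. card (fib n (fst q) \<times> fib n (snd q)))"
      unfolding Xeq
    proof (rule card_UN_disjoint[OF finQ])
      show "\<forall>q\<in>Q. finite (fib n (fst q) \<times> fib n (snd q))"
        using finite_SS unfolding fib_def by auto
      show "\<forall>q\<in>Q. \<forall>q'\<in>Q. q \<noteq> q' \<longrightarrow> (fib n (fst q) \<times> fib n (snd q)) \<inter> (fib n (fst q') \<times> fib n (snd q')) = {}"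
      proof (intro ballI impI)
        fix q q' :: "(nat \<Rightarrow> nat) \<times> (nat \<Rightarrow> nat)" assume ne: "q \<noteq> q'"
        show "(fib n (fst q) \<times> fib n (snd q)) \<inter> (fib n (fst q') \<times> fib n (snd q')) = {}"
        proof (rule ccontr)
          assume "(fib n (fst q) \<times> fib n (snd q)) \<inter> (fib n (fst q') \<times> fib n (snd q')) \<noteq> {}"
          then obtain a b where "(a, b) \<in> fib n (fst q) \<times> fib n (snd q)" "(a, b) \<in> fib n (fst q') \<times> fib n (snd q')"
            by auto
          then have "fst q = fst q'" "snd q = snd q'" unfolding fib_def by auto
          then show False using ne by (simp add: prod_eq_iff)
        qed
      qed
    qed
    also have "\<dots> = (\<Sum>q\<in>Q. c * c)"
    proof (rule sum.cong[OF refl])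
      fix q assume "q \<in> Q"
      then have "fst q permutes {0..<n}" "snd q permutes {0..<n}" unfolding Q_def Perm_def by auto
      then show "card (fib n (fst q) \<times> fib n (snd q)) = c * c"
        unfolding c_def card_cartesian_product using card_fib by metis
    qed
    finally show ?thesis by simp
  qed
  have cardQ: "card Q = fact n * card Fixk"
  proof -
    have "bij_betw (\<lambda>q. (fst q, snd q \<circ> fst q)) Q (Perm \<times> Fixk)"
    proof (rule bij_betw_byWitness[where f' = "\<lambda>q. (fst q, snd q \<circ> inv (fst q))"])
      show "\<forall>q\<in>Q. (fst (fst q, snd q \<circ> fst q), snd (fst q, snd q \<circ> fst q) \<circ> inv (fst (fst q, snd q \<circ> fst q))) = q"
      proof
        fix q assume "q \<in> Q"
        then have p: "fst q permutes {0..<n}" unfolding Q_def Perm_def by auto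
        have "snd q \<circ> fst q \<circ> inv (fst q) = snd q"
          by (simp add: o_assoc[symmetric] permutes_inv_o(1)[OF p])
        then show "(fst (fst q, snd q \<circ> fst q), snd (fst q, snd q \<circ> fst q) \<circ> inv (fst (fst q, snd q \<circ> fst q))) = q"
          by simp
      qed
      show "\<forall>q\<in>Perm \<times> Fixk. (fst (fst q, snd q \<circ> inv (fst q)), snd (fst q, snd q \<circ> inv (fst q)) \<circ> fst (fst q, snd q \<circ> inv (fst q))) = q"
      proof
        fix q assume "q \<in> Perm \<times> Fixk"
        then have p: "fst q permutes {0..<n}" unfolding Perm_def by auto
        have "snd q \<circ> inv (fst q) \<circ> fst q = snd q"
          by (simp add: o_assoc[symmetric] permutes_inv_o(2)[OF p])
        then show "(fst (fst q, snd q \<circ> inv (fst q)), snd (fst q, snd q \<circ> inv (fst q)) \<circ> fst (fst q, snd q \<circ> inv (fst q))) = q"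
          by simp
      qed
      show "(\<lambda>q. (fst q, snd q \<circ> fst q)) ` Q \<subseteq> Perm \<times> Fixk" unfolding Q_def by auto
      show "(\<lambda>q. (fst q, snd q \<circ> inv (fst q))) ` (Perm \<times> Fixk) \<subseteq> Q"
      proof
        fix y assume "y \<in> (\<lambda>q. (fst q, snd q \<circ> inv (fst q))) ` (Perm \<times> Fixk)"
        then obtain s r where sr: "s \<in> Perm" "r \<in> Fixk" "y = (s, r \<circ> inv s)" by auto
        have ps: "s permutes {0..<n}" and pr: "r permutes {0..<n}" using sr unfolding Perm_def Fixk_def by auto
        have "r \<circ> inv s permutes {0..<n}" by (rule permutes_compose[OF permutes_inv[OF ps] pr])
        moreover have "r \<circ> inv s \<circ> s = r"
          by (simp add: o_assoc[symmetric] permutes_inv_o(2)[OF ps])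
        ultimately show "y \<in> Q" using sr unfolding Q_def Perm_def by simp
      qed
    qed
    then have "card Q = card (Perm \<times> Fixk)" by (rule bij_betw_same_card)
    also have "\<dots> = card Perm * card Fixk" by (rule card_cartesian_product)
    also have "card Perm = fact n" unfolding Perm_def using card_permutations[of "{0..<n}" n] by simp
    finally show ?thesis .
  qed
  have cardL: "num_latin_squares n = fact n * c"
    using card_SS_latin[of n] card_SS[OF n1] unfolding c_def by simp
  have sumdd: "(\<Sum>i = 0..n - k. (-1) ^ i * fact (n - k) / fact i) = dd (n - k)"
    unfolding dd_def by simp
  have fk: "real (card Fixk) = real (n choose k) * dd (n - k)"
    unfolding Fixk_def by (rule card_Fixk[OF assms(2)])
  have fpos: "(fact n :: real) \<noteq> 0" by simp
  have "real (card X) = real (num_latin_squares n) ^ 2 / fact n * real (n choose k) * dd (n - k)"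
  proof -
    have "real (card X) = fact n * real (card Fixk) * (real c * real c)"
      using cardX cardQ by simp
    also have "\<dots> = fact n * (real (n choose k) * dd (n - k)) * (real c * real c)" using fk by simp
    also have "\<dots> = (fact n * real c) ^ 2 / fact n * real (n choose k) * dd (n - k)"
      using fpos by (simp add: field_simps power2_eq_square)
    also have "\<dots> = real (num_latin_squares n) ^ 2 / fact n * real (n choose k) * dd (n - k)"
      using cardL by simp
    finally show ?thesis .
  qed
  then show ?thesis unfolding sumdd X_def .
qed

end
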